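(* Let $V$ be a finite set, $f:2^V\to\mathbb{R}$ non-decreasing and submodular, $k\ge1$ an integer, $\mathrm{OPT}\subseteq V$ with $|\mathrm{OPT}|=k$ maximizing $f$ among $k$-element subsets of $V$, $A\subseteq V$ with $|A|=k$, and $A'\subseteq A$ with $|A'|<k$. Let $B'\subseteq V\setminus A'$ be the greedy set: starting from $B'=\emptyset$, while $|B'|<k-|A'|$, add an element $e\in V\setminus(A'\cup B')$ maximizing $f(A'\cup B'\cup\{e\})-f(A'\cup B')$. Then \[ f(B'\cup A')\ \ge\ f(A')+\frac{1-\frac1e}{\left\lceil\frac{|\mathrm{OPT}\setminus A'|}{k-|A'|}\right\rceil}\bigl(f(\mathrm{OPT}\cup A')-f(A')\bigr). \]
   Context: $f$ non-decreasing means $f(X)\le f(Y)$ for $X\subseteq Y$; submodular means $f(X\cup\{e\})-f(X)\ge f(Y\cup\{e\})-f(Y)$ for $X\subseteq Y\subseteq V$, $e\notin Y$. *)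

theory Defs
  imports "HOL-Analysis.Analysis"
begin

definition nondecreasing_on :: "'a set \<Rightarrow> ('a set \<Rightarrow> real) \<Rightarrow> bool" where
  "nondecreasing_on V f \<longleftrightarrow> (\<forall>X Y. X \<subseteq> Y \<and> Y \<subseteq> V \<longrightarrow> f X \<le> f Y)"

definition submodular_on :: "'a set \<Rightarrow> ('a set \<Rightarrow> real) \<Rightarrow> bool" where
  "submodular_on V f \<longleftrightarrow>
     (\<forall>X Y e. X \<subseteq> Y \<and> Y \<subseteq> V \<and> e \<in> V \<and> e \<notin> Y \<longrightarrow>
        f (X \<union> {e}) - f X \<ge> f (Y \<union> {e}) - f Y)"

text \<open>A run of the greedy algorithm started on top of a fixed set S: the list es records
  the chosen elements in order; the i-th element is taken from V minus (S and the
  previously chosen elements) and maximizes the marginal gain f(S \<union> B \<union> {e}) - f(S \<union> B),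
  where B is the set of previously chosen elements (ties broken arbitrarily).\<close>
definition greedy_run :: "'a set \<Rightarrow> ('a set \<Rightarrow> real) \<Rightarrow> 'a set \<Rightarrow> 'a list \<Rightarrow> bool" where
  "greedy_run V f S es \<longleftrightarrow>
     (\<forall>i < length es.
        es ! i \<in> V - (S \<union> set (take i es)) \<and>
        (\<forall>x \<in> V - (S \<union> set (take i es)).
            f (S \<union> set (take i es) \<union> {x}) - f (S \<union> set (take i es))
            \<le> f (S \<union> set (take i es) \<union> {es ! i}) - f (S \<union> set (take i es))))"

end

theory Submission
  imports Defs
begin

lemma sub_sum:
  assumes sm: "submodular_on V f" and fin: "finite T" and sub: "S \<union> T \<subseteq> V"
  shows "f (S \<union> T) - f S \<le> (\<Sum>t\<in>T - S. f (S \<union> {t}) - f S)"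
  using fin sub
proof (induction T rule: finite_induct)
  case empty
  then show ?case by (simp add: Un_empty_right)
next
  case (insert x T)
  have IH: "f (S \<union> T) - f S \<le> (\<Sum>t\<in>T - S. f (S \<union> {t}) - f S)"
    using insert by auto
  show ?case
  proof (cases "x \<in> S")
    case True
    then have "S \<union> insert x T = S \<union> T" "insert x T - S = T - S" by auto
    then show ?thesis using IH by simp
  next
    case False
    have e: "insert x T - S = insert x (T - S)" using False by auto
    have "f (S \<union> T \<union> {x}) - f (S \<union> T) \<le> f (S \<union> {x}) - f S"
    proof -
      have "S \<subseteq> S \<union> T" "S \<union> T \<subseteq> V" "x \<in> V" "x \<notin> S \<union> T"
        using insert.prems insert.hyps False by auto
      then show ?thesis using sm unfolding submodular_on_def by blast
    qed
    moreover have "S \<union> insert x T = S \<union> T \<union> {x}" by auto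
    ultimately show ?thesis using IH e insert.hyps by simp
  qed
qed

lemma real_ineq:
  fixes p m :: nat
  assumes "p \<ge> 1" "m \<ge> 1"
  shows "(1 - 1 / exp 1) / real_of_int \<lceil>real p / real m\<rceil> \<le> 1 - (1 - 1 / real p) ^ m"
proof -
  define x where "x = real m / real p"
  have xpos: "x > 0" using assms by (simp add: x_def)
  have "1 - 1 / real p \<le> exp (- (1 / real p))"
    using exp_ge_add_one_self[of "- (1 / real p)"] by simp
  moreover have "0 \<le> 1 - 1 / real p" using assms by simp
  ultimately have "(1 - 1 / real p) ^ m \<le> exp (- (1 / real p)) ^ m"
    by (intro power_mono) auto
  also have "\<dots> = exp (- x)" unfolding x_def
    by (simp add: exp_of_nat_mult[symmetric])
  finally have h1: "(1 - 1 / real p) ^ m \<le> exp (- x)" .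
  define c where "c = real_of_int \<lceil>real p / real m\<rceil>"
  have c1: "c \<ge> real p / real m" unfolding c_def by linarith
  have cpos: "c \<ge> 1"
  proof -
    have "real p / real m > 0" using assms by simp
    then have "\<lceil>real p / real m\<rceil> \<ge> 1" by (simp add: one_le_ceiling)
    then show ?thesis unfolding c_def by simp
  qed
  have xc: "x * c \<ge> 1" using c1 assms unfolding x_def
    by (simp add: field_simps)
  have e1: "0 < 1 - 1 / exp (1::real)"
    by (simp add: exp_gt_one)
  have "(1 - 1 / exp 1) / c \<le> 1 - exp (- x)"
  proof (cases "x \<ge> 1")
    case True
    have "(1 - 1 / exp 1) / c \<le> 1 - 1 / exp 1" using cpos e1
      by (simp add: divide_le_eq)
    also have "\<dots> \<le> 1 - exp (- x)" using True
      by (simp add: exp_minus inverse_eq_divide frac_le)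
    finally show ?thesis .
  next
    case False
    have cv: "convex_on UNIV exp" by (rule exp_convex)
    have "exp ((1 - x) *\<^sub>R 0 + x *\<^sub>R (-1)) \<le> (1 - x) * exp 0 + x * exp (-1)"
      using convex_onD[OF cv, of x 0 "-1"] xpos False by simp
    then have "exp (- x) \<le> 1 - x + x * exp (-1)" by (simp add: algebra_simps)
    then have "x * (1 - 1 / exp 1) \<le> 1 - exp (- x)"
      by (simp add: exp_minus inverse_eq_divide algebra_simps)
    moreover have "(1 - 1 / exp 1) / c \<le> x * (1 - 1 / exp 1)"
    proof -
      have "1 / c \<le> x" using xc cpos by (simp add: divide_le_eq mult.commute)
      then have "(1 - 1 / exp 1) * (1 / c) \<le> (1 - 1 / exp 1) * x"
        using e1 by (intro mult_left_mono) auto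
      then show ?thesis by (simp add: mult.commute)
    qed
    ultimately show ?thesis by linarith
  qed
  then show ?thesis using h1 unfolding c_def by linarith
qed

theorem mainTheorem3:
  fixes V :: "'a set" and f :: "'a set \<Rightarrow> real" and k :: nat
    and OPT A A' :: "'a set" and es :: "'a list"
  assumes "finite V"
    and "nondecreasing_on V f" and "submodular_on V f"
    and "k \<ge> 1"
    and "OPT \<subseteq> V" and "card OPT = k"
    and "\<forall>S. S \<subseteq> V \<and> card S = k \<longrightarrow> f S \<le> f OPT"
    and "A \<subseteq> V" and "card A = k"
    and "A' \<subseteq> A" and "card A' < k"
    and "greedy_run V f A' es" and "length es = k - card A'"
  shows "f (set es \<union> A') \<ge> f A' +
           (1 - 1 / exp 1) / real_of_int \<lceil>real (card (OPT - A')) / real (k - card A')\<rceil>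
             * (f (OPT \<union> A') - f A')"
proof -
  note mono = assms(2)[unfolded nondecreasing_on_def, rule_format]
  define m where "m = k - card A'"
  define Ot where "Ot = OPT - A'"
  define p where "p = card Ot"
  define S where "S i = A' \<union> set (take i es)" for i
  have m1: "m \<ge> 1" using assms unfolding m_def by simp
  have A'V: "A' \<subseteq> V" using assms by auto
  have OV: "Ot \<subseteq> V" using assms unfolding Ot_def by auto
  have finO: "finite Ot" using OV assms(1) finite_subset by blast
  have step: "es ! i \<in> V - S i \<and> (\<forall>x\<in>V - S i. f (S i \<union> {x}) - f (S i) \<le> f (S i \<union> {es ! i}) - f (S i))"
    if "i < m" for i
  proof -
    have g: "\<forall>i < length es.
        es ! i \<in> V - (A' \<union> set (take i es)) \<and>
        (\<forall>x \<in> V - (A' \<union> set (take i es)).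
            f (A' \<union> set (take i es) \<union> {x}) - f (A' \<union> set (take i es))
            \<le> f (A' \<union> set (take i es) \<union> {es ! i}) - f (A' \<union> set (take i es)))"
      using assms(12) unfolding greedy_run_def .
    have "i < length es" using that assms(13) unfolding m_def by simp
    from g[rule_format, OF this] show ?thesis unfolding S_def .
  qed
  have Ssuc: "S (Suc i) = S i \<union> {es ! i}" if "i < m" for i
    using that assms(13) unfolding S_def m_def by (auto simp: take_Suc_conv_app_nth)
  have esV: "set es \<subseteq> V"
  proof
    fix x assume "x \<in> set es"
    then obtain j where "j < length es" "x = es ! j" by (auto simp: in_set_conv_nth)
    then show "x \<in> V" using step[of j] assms(13) unfolding m_def by auto
  qed
  have SV: "S i \<subseteq> V" for i
    using A'V set_take_subset[of i es] esV unfolding S_def by blast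
  have eqOPT: "OPT \<union> A' = A' \<union> Ot" unfolding Ot_def by auto
  have Sm: "set es \<union> A' = S m" unfolding S_def m_def using assms(13) by auto
  have S0: "S 0 = A'" unfolding S_def by simp
  have D0: "f A' \<le> f (A' \<union> Ot)" using mono[of A' "A' \<union> Ot"] A'V OV by auto
  show ?thesis
  proof (cases "p = 0")
    case True
    have "A' \<subseteq> S m" unfolding S_def by auto
    then have "f A' \<le> f (S m)" using mono[of A' "S m"] SV[of m] by blast
    then have "f A' \<le> f (set es \<union> A')" using Sm by simp
    then show ?thesis using True unfolding p_def Ot_def by simp
  next
    case False
    then have p1: "p \<ge> 1" by simp
    define D where "D i = f (A' \<union> Ot) - f (S i)" for i
    have gain: "real p * (f (S (Suc i)) - f (S i)) \<ge> D i" if "i < m" for i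
    proof -
      define g where "g = f (S (Suc i)) - f (S i)"
      have g0: "g \<ge> 0" unfolding g_def
        using mono[of "S i" "S (Suc i)"] SV[of "Suc i"] Ssuc[OF that] by auto
      have "A' \<union> Ot \<subseteq> S i \<union> Ot" "S i \<union> Ot \<subseteq> V" using SV[of i] OV unfolding S_def by auto
      then have "f (A' \<union> Ot) \<le> f (S i \<union> Ot)" using mono by blast
      moreover have "f (S i \<union> Ot) - f (S i) \<le> (\<Sum>t\<in>Ot - S i. f (S i \<union> {t}) - f (S i))"
        using sub_sum[OF assms(3) finO] SV OV by auto
      moreover have "(\<Sum>t\<in>Ot - S i. f (S i \<union> {t}) - f (S i)) \<le> (\<Sum>t\<in>Ot - S i. g)"
        apply (rule sum_mono) using step[OF that] OV unfolding g_def Ssuc[OF that] by auto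
      moreover have "(\<Sum>t\<in>Ot - S i. g) = real (card (Ot - S i)) * g" by simp
      moreover have "real (card (Ot - S i)) * g \<le> real p * g"
        using g0 finO unfolding p_def by (intro mult_right_mono) (auto intro: card_mono)
      ultimately show ?thesis unfolding D_def g_def by linarith
    qed
    have rec: "D i \<le> (1 - 1 / real p) ^ i * D 0" if "i \<le> m" for i
      using that
    proof (induction i)
      case 0 then show ?case by simp
    next
      case (Suc i)
      have "D (Suc i) = D i - (f (S (Suc i)) - f (S i))" unfolding D_def by simp
      also have "\<dots> \<le> D i - D i / real p"
      proof -
        have "D i \<le> real p * (f (S (Suc i)) - f (S i))" using gain[of i] Suc.prems by simp
        then have "D i / real p \<le> f (S (Suc i)) - f (S i)" using p1
          by (simp add: divide_le_eq mult.commute)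
        then show ?thesis by linarith
      qed
      also have "\<dots> = (1 - 1 / real p) * D i" by (simp add: algebra_simps)
      also have "\<dots> \<le> (1 - 1 / real p) * ((1 - 1 / real p) ^ i * D 0)"
        using Suc p1 by (intro mult_left_mono) auto
      finally show ?case by simp
    qed
    have D00: "D 0 \<ge> 0" unfolding D_def S0 using D0 by simp
    have "f (S m) - f A' = D 0 - D m" unfolding D_def S0 by simp
    also have "\<dots> \<ge> (1 - (1 - 1 / real p) ^ m) * D 0" using rec[of m]
      by (simp add: algebra_simps)
    finally have fin1: "f (S m) - f A' \<ge> (1 - (1 - 1 / real p) ^ m) * D 0" .
    have "(1 - 1 / exp 1) / real_of_int \<lceil>real p / real m\<rceil> * D 0 \<le> (1 - (1 - 1 / real p) ^ m) * D 0"
      using real_ineq[OF p1 m1] D00 by (rule mult_right_mono)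
    then show ?thesis using fin1 Sm eqOPT unfolding D_def S0 p_def Ot_def m_def by simp
  qed
qed

end
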